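(* Let $1\le k\le n$, $p>q$, and let $\varphi$ be a positive smooth function on $\mathbb{S}^n$. If $u$ and $\bar u$ are two positive admissible $C^2$ solutions on $\mathbb{S}^n$ of $$\sigma_k(u_{ij}+u\delta_{ij})=u^{p-1}(u^2+|\nabla u|^2)^{\frac{k+1-q}{2}}\varphi(x),$$ then $u\equiv\bar u$.
   Context: $\mathbb{S}^n$ is the round unit sphere; $u_{ij}$ are components of the covariant Hessian in a local orthonormal frame. $\sigma_k$ is the $k$-th elementary symmetric polynomial of the eigenvalues. $\Gamma_k=\{\lambda\in\mathbb{R}^n:\sigma_i(\lambda)>0,\ 1\le i\le k\}$; a solution is admissible if the eigenvalues of $(u_{ij}+u\delta_{ij})$ lie in $\Gamma_k$ everywhere. *)

theory Defs
  imports "HOL-Analysis.Analysis"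
begin

fun Ck_on :: "nat \<Rightarrow> 'a::euclidean_space set \<Rightarrow> ('a \<Rightarrow> real) \<Rightarrow> bool" where
  "Ck_on 0 S f = continuous_on S f"
| "Ck_on (Suc m) S f = (continuous_on S f \<and> f differentiable_on S \<and>
      (\<forall>v. Ck_on m S (\<lambda>y. frechet_derivative f (at y) v)))"

definition smooth_on :: "'a::euclidean_space set \<Rightarrow> ('a \<Rightarrow> real) \<Rightarrow> bool" where
  "smooth_on S f = (\<forall>m. Ck_on m S f)"

text \<open>Zero-homogeneous extension of a function on the unit sphere to the
  punctured space.  A function on the sphere is C^m iff this extension is C^m
  on the complement of the origin.\<close>
definition hom0 :: "('a::euclidean_space \<Rightarrow> real) \<Rightarrow> 'a \<Rightarrow> real" where
  "hom0 u x = u (x /\<^sub>R norm x)"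

definition punctured :: "'a::euclidean_space set" where
  "punctured = - {0}"

text \<open>Covariant Hessian of u on the sphere applied to tangent vectors v, w at x
  (computed through the zero-homogeneous extension).\<close>
definition sph_hess :: "('a::euclidean_space \<Rightarrow> real) \<Rightarrow> 'a \<Rightarrow> 'a \<Rightarrow> 'a \<Rightarrow> real" where
  "sph_hess u x v w =
     frechet_derivative (\<lambda>y. frechet_derivative (hom0 u) (at y) v) (at x) w"

definition sph_grad_sq :: "('a::euclidean_space \<Rightarrow> real) \<Rightarrow> 'a \<Rightarrow> real" where
  "sph_grad_sq u x = (\<Sum>b\<in>Basis. (frechet_derivative (hom0 u) (at x) b)\<^sup>2)"

definition tangent_frame :: "'a::euclidean_space \<Rightarrow> (nat \<Rightarrow> 'a) \<Rightarrow> bool" where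
  "tangent_frame x e = (\<forall>i\<in>{1..DIM('a) - 1}. e i \<bullet> x = 0 \<and>
      (\<forall>j\<in>{1..DIM('a) - 1}. e i \<bullet> e j = (if i = j then 1 else 0)))"

text \<open>lam_1..lam_n are the eigenvalues of the matrix (u_ij + u delta_ij) at x:
  there is an orthonormal tangent frame diagonalising it with these diagonal entries.\<close>
definition sph_eigs :: "('a::euclidean_space \<Rightarrow> real) \<Rightarrow> 'a \<Rightarrow> (nat \<Rightarrow> real) \<Rightarrow> bool" where
  "sph_eigs u x lam = (\<exists>e. tangent_frame x e \<and>
      (\<forall>i\<in>{1..DIM('a) - 1}. \<forall>j\<in>{1..DIM('a) - 1}.
         sph_hess u x (e i) (e j) + (if i = j then u x else 0) = (if i = j then lam i else 0)))"

definition sigma :: "nat \<Rightarrow> nat \<Rightarrow> (nat \<Rightarrow> real) \<Rightarrow> real" where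
  "sigma n k lam = (\<Sum>I\<in>{I. I \<subseteq> {1..n} \<and> card I = k}. \<Prod>i\<in>I. lam i)"

definition in_Gamma :: "nat \<Rightarrow> nat \<Rightarrow> (nat \<Rightarrow> real) \<Rightarrow> bool" where
  "in_Gamma n k lam = (\<forall>i\<in>{1..k}. sigma n i lam > 0)"

definition pos_adm_solution ::
  "nat \<Rightarrow> real \<Rightarrow> real \<Rightarrow> ('a::euclidean_space \<Rightarrow> real) \<Rightarrow> ('a \<Rightarrow> real) \<Rightarrow> bool" where
  "pos_adm_solution k p q phi u =
    (Ck_on 2 punctured (hom0 u) \<and>
     (\<forall>x\<in>sphere 0 1. u x > 0 \<and>
        (\<exists>lam. sph_eigs u x lam \<and> in_Gamma (DIM('a) - 1) k lam \<and>
           sigma (DIM('a) - 1) k lam =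
             u x powr (p - 1) * (u x ^ 2 + sph_grad_sq u x) powr ((real k + 1 - q) / 2) * phi x)))"

end

theory Submission
  imports Defs
begin

definition sig :: "nat set \<Rightarrow> nat \<Rightarrow> (nat \<Rightarrow> real) \<Rightarrow> real" where
  "sig S k lam = (\<Sum>I\<in>{I. I \<subseteq> S \<and> card I = k}. \<Prod>i\<in>I. lam i)"

lemma sigma_sig: "sigma n k lam = sig {1..n} k lam"
  by (simp add: sigma_def sig_def)

lemma sig_0: "finite S \<Longrightarrow> sig S 0 lam = 1"
proof -
  assume "finite S"
  then have "{I. I \<subseteq> S \<and> card I = 0} = {{}}"
    using rev_finite_subset by fastforce
  then show ?thesis by (simp add: sig_def)
qed

lemma sig_big: "finite S \<Longrightarrow> card S < k \<Longrightarrow> sig S k lam = 0"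
proof -
  assume "finite S" "card S < k"
  then have e: "{I. I \<subseteq> S \<and> card I = k} = {}" using card_mono by (metis (mono_tags, lifting) Collect_empty_eq leD)
  show ?thesis unfolding sig_def e by simp
qed

lemma sig_insert:
  assumes "finite S" "a \<notin> S"
  shows "sig (insert a S) (Suc k) lam = sig S (Suc k) lam + lam a * sig S k lam"
proof -
  let ?A = "{I. I \<subseteq> insert a S \<and> card I = Suc k}"
  let ?B = "{I. I \<subseteq> S \<and> card I = Suc k}"
  let ?C = "{I. I \<subseteq> S \<and> card I = k}"
  have split: "?A = ?B \<union> (insert a) ` ?C"
  proof (rule set_eqI, rule iffI)
    fix I assume "I \<in> ?A"
    then have I: "I \<subseteq> insert a S" "card I = Suc k" by auto
    show "I \<in> ?B \<union> (insert a) ` ?C"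
    proof (cases "a \<in> I")
      case True
      then have "I = insert a (I - {a})" by auto
      moreover have "I - {a} \<subseteq> S" using I by auto
      moreover have "card (I - {a}) = k" using I True by (simp add: card_Diff_singleton_if)
      ultimately show ?thesis by blast
    next
      case False then show ?thesis using I by auto
    qed
  next
    fix I assume "I \<in> ?B \<union> (insert a) ` ?C"
    then show "I \<in> ?A"
    proof
      assume "I \<in> ?B" then show ?thesis by auto
    next
      assume "I \<in> (insert a) ` ?C"
      then obtain J where J: "J \<subseteq> S" "card J = k" "I = insert a J" by auto
      then have "finite J" "a \<notin> J" using assms finite_subset by auto
      then show ?thesis using J by auto
    qed
  qed
  have disj: "?B \<inter> (insert a) ` ?C = {}" using assms by auto
  have finB: "finite ?B" by (rule finite_subset[of _ "Pow S"]) (use assms in auto)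
  have finC: "finite ?C" by (rule finite_subset[of _ "Pow S"]) (use assms in auto)
  have inj: "inj_on (insert a) ?C"
  proof (rule inj_onI)
    fix X Y assume "X \<in> ?C" "Y \<in> ?C" "insert a X = insert a Y"
    then have "a \<notin> X" "a \<notin> Y" using assms by auto
    then show "X = Y" using \<open>insert a X = insert a Y\<close>
      by (metis Diff_insert_absorb)
  qed
  have "sig (insert a S) (Suc k) lam = (\<Sum>I\<in>?B. \<Prod>i\<in>I. lam i) + (\<Sum>I\<in>(insert a) ` ?C. \<Prod>i\<in>I. lam i)"
    unfolding sig_def split using finB finC disj by (intro sum.union_disjoint) auto
  also have "(\<Sum>I\<in>(insert a) ` ?C. \<Prod>i\<in>I. lam i) = (\<Sum>I\<in>?C. \<Prod>i\<in>insert a I. lam i)"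
    using inj by (simp add: sum.reindex)
  also have "\<dots> = (\<Sum>I\<in>?C. lam a * (\<Prod>i\<in>I. lam i))"
  proof (rule sum.cong[OF refl])
    fix I assume "I \<in> ?C"
    then have "I \<subseteq> S" by simp
    then have "finite I" "a \<notin> I" using assms finite_subset by auto
    then show "(\<Prod>i\<in>insert a I. lam i) = lam a * (\<Prod>i\<in>I. lam i)" by simp
  qed
  finally show ?thesis unfolding sig_def by (simp only: sum_distrib_left)
qed

definition PP :: "nat set \<Rightarrow> (nat \<Rightarrow> real) \<Rightarrow> real poly" where
  "PP S lam = (\<Prod>j\<in>S. [:lam j, 1:])"

lemma lin_mult: "[:c, 1:] * (p::real poly) = smult c p + pCons 0 p"
  by (simp add: mult_pCons_left smult_one)

lemma coeff_PP:
  assumes "finite S"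
  shows "coeff (PP S lam) i = (if i \<le> card S then sig S (card S - i) lam else 0)"
  using assms
proof (induction S arbitrary: i rule: finite_induct)
  case empty
  then show ?case by (simp add: PP_def sig_0 coeff_1)
next
  case (insert a S)
  let ?N = "card S"
  have PPi: "PP (insert a S) lam = [:lam a, 1:] * PP S lam"
    using insert by (simp add: PP_def)
  have ci: "card (insert a S) = Suc ?N" using insert by simp
  show ?case
  proof (cases i)
    case 0
    have "coeff (PP (insert a S) lam) i = lam a * sig S ?N lam"
      using insert.IH 0 PPi by (simp add: lin_mult)
    moreover have "sig (insert a S) (Suc ?N) lam = sig S (Suc ?N) lam + lam a * sig S ?N lam"
      using insert by (simp add: sig_insert)
    moreover have "sig S (Suc ?N) lam = 0" using insert by (simp add: sig_big)
    ultimately show ?thesis using 0 ci by simp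
  next
    case (Suc j)
    have c: "coeff (PP (insert a S) lam) i = lam a * coeff (PP S lam) (Suc j) + coeff (PP S lam) j"
      using PPi Suc by (simp add: lin_mult)
    show ?thesis
    proof (cases "Suc j \<le> ?N")
      case True
      have e: "?N - j = Suc (?N - Suc j)" using True by simp
      have "sig (insert a S) (Suc (?N - Suc j)) lam = sig S (Suc (?N - Suc j)) lam + lam a * sig S (?N - Suc j) lam"
        using insert by (simp add: sig_insert)
      then show ?thesis using c True Suc ci insert.IH e by simp
    next
      case False
      show ?thesis
      proof (cases "j = ?N")
        case True
        then show ?thesis using c Suc ci insert.IH insert.hyps by (simp add: sig_0)
      next
        case False
        then show ?thesis using c Suc ci insert.IH \<open>\<not> Suc j \<le> ?N\<close> by simp
      qed
    qed
  qed
qed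

lemma poly_PP: "finite S \<Longrightarrow> poly (PP S lam) x = (\<Prod>j\<in>S. x + lam j)"
  by (simp add: PP_def poly_prod add.commute)

lemma PP_root: "finite S \<Longrightarrow> j \<in> S \<Longrightarrow> poly (PP S lam) (- lam j) = 0"
  by (auto simp: poly_PP prod_zero_iff)

lemma rolle_step:
  assumes fin: "finite S" and cS: "card S = n" and n2: "2 \<le> n" and inj: "inj_on lam S"
  shows "\<exists>rho. inj_on rho {..<n-1} \<and>
           (\<forall>m \<le> n-1. real n * sig {..<n-1} m rho = real (n - m) * sig S m lam)"
proof -
  define P where "P = PP S lam"
  define R where "R = (\<lambda>j. - lam j) ` S"
  have injR: "inj_on (\<lambda>j. - lam j) S" using inj unfolding inj_on_def by auto
  have cR: "card R = n" unfolding R_def using card_image[OF injR] cS by simp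
  have finR: "finite R" unfolding R_def using fin by simp
  define xs where "xs = sorted_list_of_set R"
  have lxs: "length xs = n" unfolding xs_def using cR by simp
  have sxs: "sorted_wrt (<) xs" unfolding xs_def by (rule strict_sorted_list_of_set)
  have setxs: "set xs = R" unfolding xs_def using finR by simp
  have lt: "xs ! i < xs ! j" if "i < j" "j < n" for i j
    using sorted_wrt_nth_less[OF sxs that(1)] that lxs by simp
  have root: "poly P (xs ! i) = 0" if "i < n" for i
  proof -
    have "xs ! i \<in> R" using that lxs setxs nth_mem by metis
    then obtain j where "j \<in> S" "xs ! i = - lam j" unfolding R_def by auto
    then show ?thesis unfolding P_def using PP_root[OF fin] by simp
  qed
  have contP: "continuous_on A (poly P)" for A
    by (rule continuous_at_imp_continuous_on) (auto intro: DERIV_isCont[OF poly_DERIV])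
  have "\<exists>z. xs ! i < z \<and> z < xs ! Suc i \<and> poly (pderiv P) z = 0" if "i < n - 1" for i
  proof -
    have ab: "xs ! i < xs ! Suc i" using lt that by simp
    have eq: "poly P (xs ! i) = poly P (xs ! Suc i)" using root that by simp
    obtain z where z: "xs ! i < z" "z < xs ! Suc i" "(*) (poly (pderiv P) z) = (\<lambda>v. 0)"
      using Rolle_deriv[OF ab eq contP has_field_derivative_imp_has_derivative[OF poly_DERIV]]
      by blast
    then have "poly (pderiv P) z = 0" by (metis mult_1_right)
    with z show ?thesis by blast
  qed
  then obtain z where z: "\<And>i. i < n - 1 \<Longrightarrow> xs ! i < z i \<and> z i < xs ! Suc i \<and> poly (pderiv P) (z i) = 0"
    by metis
  have zmono: "z i < z j" if "i < j" "j < n - 1" for i j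
  proof -
    have "z i < xs ! Suc i" using z that by simp
    also have "xs ! Suc i \<le> xs ! j"
    proof (cases "Suc i = j")
      case False
      then have "Suc i < j" using that by simp
      moreover have "j < n" using that by simp
      ultimately show ?thesis using lt[of "Suc i" j] by simp
    qed simp
    also have "xs ! j < z j" using z that by simp
    finally show ?thesis .
  qed
  have injz: "inj_on z {..<n-1}"
  proof (rule inj_onI)
    fix i j assume "i \<in> {..<n-1}" "j \<in> {..<n-1}" "z i = z j"
    then show "i = j" using zmono by (metis lessThan_iff less_irrefl nat_neq_iff)
  qed
  define rho where "rho = (\<lambda>i. - z i)"
  have injrho: "inj_on rho {..<n-1}" using injz unfolding rho_def inj_on_def by auto
  define Q where "Q = smult (real n) (PP {..<n-1} rho)"
  define D where "D = pderiv P - Q"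
  have cP: "coeff P i = (if i \<le> n then sig S (n - i) lam else 0)" for i
    unfolding P_def using coeff_PP[OF fin] cS by simp
  have cdP: "coeff (pderiv P) i = real (Suc i) * (if Suc i \<le> n then sig S (n - Suc i) lam else 0)" for i
    by (simp add: coeff_pderiv cP)
  have cQ: "coeff Q i = real n * (if i \<le> n - 1 then sig {..<n-1} (n - 1 - i) rho else 0)" for i
    unfolding Q_def using coeff_PP[of "{..<n-1}" rho i] by simp
  have cD: "coeff D i = 0" if "i > n - 2" for i
  proof (cases "i = n - 1")
    case True
    then have "Suc i = n" using n2 by simp
    then show ?thesis unfolding D_def using cdP cQ True fin by (simp add: sig_0)
  next
    case False
    then have "i \<ge> n" using that by simp
    then show ?thesis unfolding D_def using cdP cQ n2 by simp
  qed
  have degD: "degree D \<le> n - 2" using cD by (intro degree_le) auto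
  have D0: "D = 0"
  proof (rule ccontr)
    assume "D \<noteq> 0"
    have sub: "z ` {..<n-1} \<subseteq> {x. poly D x = 0}"
    proof
      fix x assume "x \<in> z ` {..<n-1}"
      then obtain i where i: "i < n - 1" "x = z i" by auto
      have "poly (pderiv P) x = 0" using z i by simp
      moreover have "poly (PP {..<n-1} rho) x = 0"
        using i by (auto simp: poly_PP prod_zero_iff rho_def)
      ultimately show "x \<in> {x. poly D x = 0}" by (simp add: D_def Q_def)
    qed
    have "n - 1 = card (z ` {..<n-1})" using card_image[OF injz] by simp
    also have "\<dots> \<le> card {x. poly D x = 0}"
      using sub poly_roots_finite[OF \<open>D \<noteq> 0\<close>] by (rule card_mono[rotated])
    also have "\<dots> \<le> degree D" by (rule card_poly_roots_bound[OF \<open>D \<noteq> 0\<close>])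
    finally show False using degD n2 by simp
  qed
  have "real n * sig {..<n-1} m rho = real (n - m) * sig S m lam" if "m \<le> n - 1" for m
  proof -
    have "coeff (pderiv P) (n - 1 - m) = coeff Q (n - 1 - m)"
      using D0 unfolding D_def by simp
    moreover have "coeff (pderiv P) (n - 1 - m) = real (n - m) * sig S m lam"
    proof -
      have "Suc (n - 1 - m) = n - m" "n - (n - m) = m" using that n2 by auto
      then show ?thesis using cdP[of "n - 1 - m"] by simp
    qed
    moreover have "coeff Q (n - 1 - m) = real n * sig {..<n-1} m rho"
    proof -
      have "n - 1 - m \<le> n - 1" "n - 1 - (n - 1 - m) = m" using that by auto
      then show ?thesis using cQ[of "n - 1 - m"] by simp
    qed
    ultimately show ?thesis by simp
  qed
  with injrho show ?thesis by blast
qed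

definition E :: "nat set \<Rightarrow> nat \<Rightarrow> (nat \<Rightarrow> real) \<Rightarrow> real" where
  "E S k lam = sig S k lam / real (card S choose k)"

lemma sig_1: "finite S \<Longrightarrow> sig S 1 x = (\<Sum>j\<in>S. x j)"
proof (induction S rule: finite_induct)
  case empty then show ?case by (simp add: sig_big)
next
  case (insert a S)
  then show ?case using sig_insert[of S a 0 x] by (simp add: sig_0)
qed

lemma sig_2: "finite S \<Longrightarrow> 2 * sig S 2 x = (\<Sum>j\<in>S. x j)\<^sup>2 - (\<Sum>j\<in>S. (x j)\<^sup>2)"
proof (induction S rule: finite_induct)
  case empty then show ?case by (simp add: sig_big)
next
  case (insert a S)
  have "sig (insert a S) 2 x = sig S 2 x + x a * sig S 1 x"
    using sig_insert[OF insert.hyps, of 1 x] unfolding Suc_1 .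
  then have "sig (insert a S) 2 x = sig S 2 x + x a * (\<Sum>j\<in>S. x j)"
    using sig_1[OF insert.hyps(1), of x] by simp
  then show ?case using insert by (simp add: power2_eq_square algebra_simps)
qed

lemma E_base: "finite S \<Longrightarrow> E S 2 x \<le> (E S 1 x)\<^sup>2"
proof -
  assume fin: "finite S"
  define n where "n = card S"
  show ?thesis
  proof (cases "n < 2")
    case True
    then have "card S choose 2 = 0" unfolding n_def by simp
    then have "E S 2 x = 0" by (simp add: E_def)
    then show ?thesis by simp
  next
    case False
    have c2: "2 * real (n choose 2) = real n * (real n - 1)"
    proof -
      have "2 * (n choose 2) = n * (n - 1 choose 1)" using times_binomial_minus1_eq[of 2 n] by simp
      then have "2 * (n choose 2) = n * (n - 1)" by simp
      then have "real (2 * (n choose 2)) = real (n * (n - 1))" by metis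
      then show ?thesis using False by (simp add: of_nat_diff)
    qed
    let ?s1 = "\<Sum>j\<in>S. x j" and ?s2 = "\<Sum>j\<in>S. (x j)\<^sup>2"
    have cs: "?s1\<^sup>2 \<le> ?s2 * real n" unfolding n_def by (rule sum_squared_le_sum_of_squares)
    have s2: "2 * sig S 2 x = ?s1\<^sup>2 - ?s2" using sig_2[OF fin] .
    have npos: "real n \<ge> 2" using False by simp
    have E2: "E S 2 x = 2 * sig S 2 x / (real n * (real n - 1))"
    proof -
      have "E S 2 x = 2 * sig S 2 x / (2 * real (n choose 2))" by (simp add: E_def n_def)
      then show ?thesis using c2 by simp
    qed
    have E1: "E S 1 x = ?s1 / real n" unfolding E_def using sig_1[OF fin] n_def by simp
    have "2 * sig S 2 x / (real n * (real n - 1)) \<le> (?s1 / real n)\<^sup>2"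
    proof -
      have "2 * sig S 2 x * (real n)\<^sup>2 \<le> ?s1\<^sup>2 * (real n * (real n - 1))"
      proof -
        have "2 * sig S 2 x * (real n)\<^sup>2 = (?s1\<^sup>2 - ?s2) * (real n)\<^sup>2" using s2 by simp
        also have "\<dots> \<le> (?s1\<^sup>2 - ?s1\<^sup>2 / real n) * (real n)\<^sup>2"
        proof -
          have "?s1\<^sup>2 / real n \<le> ?s2" using cs npos by (simp add: divide_le_eq)
          then show ?thesis by (intro mult_right_mono) auto
        qed
        also have "\<dots> = ?s1\<^sup>2 * (real n * (real n - 1))" using npos
          by (simp add: field_simps power2_eq_square)
        finally show ?thesis .
      qed
      then show ?thesis using npos by (simp add: field_simps power2_eq_square)
    qed
    then show ?thesis using E1 E2 by simp
  qed
qed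

lemma sig_full: "finite S \<Longrightarrow> sig S (card S) lam = (\<Prod>j\<in>S. lam j)"
proof -
  assume fin: "finite S"
  have "{I. I \<subseteq> S \<and> card I = card S} = {S}"
    using card_subset_eq[OF fin] by auto
  then show ?thesis by (simp add: sig_def)
qed

lemma sig_recip:
  assumes fin: "finite S" and nz: "\<forall>j\<in>S. lam j \<noteq> 0" and m: "m \<le> card S"
  shows "sig S m (\<lambda>j. 1 / lam j) * (\<Prod>j\<in>S. lam j) = sig S (card S - m) lam"
proof -
  let ?X = "{I. I \<subseteq> S \<and> card I = m}" and ?Y = "{J. J \<subseteq> S \<and> card J = card S - m}"
  have "sig S m (\<lambda>j. 1 / lam j) * (\<Prod>j\<in>S. lam j) = (\<Sum>I\<in>?X. \<Prod>j\<in>S - I. lam j)"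
    unfolding sig_def sum_distrib_right
  proof (rule sum.cong[OF refl])
    fix I assume "I \<in> ?X"
    then have IS: "I \<subseteq> S" by simp
    then have fI: "finite I" using fin finite_subset by blast
    have "(\<Prod>j\<in>S. lam j) = (\<Prod>j\<in>S - I. lam j) * (\<Prod>j\<in>I. lam j)"
      using prod.subset_diff[OF IS fin] .
    moreover have "(\<Prod>j\<in>I. 1 / lam j) * (\<Prod>j\<in>I. lam j) = 1"
      using nz IS by (simp add: prod_dividef subset_iff prod_zero_iff[OF fI])
    ultimately show "(\<Prod>j\<in>I. 1 / lam j) * (\<Prod>j\<in>S. lam j) = (\<Prod>j\<in>S - I. lam j)"
      by (metis (no_types, lifting) mult.left_commute mult.right_neutral)
  qed
  also have "\<dots> = (\<Sum>J\<in>?Y. \<Prod>j\<in>J. lam j)"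
  proof (rule sum.reindex_bij_witness[of _ "\<lambda>J. S - J" "\<lambda>I. S - I"])
    fix I assume "I \<in> ?X"
    then have IS: "I \<subseteq> S" "card I = m" by auto
    then have fI: "finite I" using fin finite_subset by blast
    show "S - (S - I) = I" using IS by auto
    show "S - I \<in> ?Y" using IS fI by (simp add: card_Diff_subset)
  next
    fix J assume "J \<in> ?Y"
    then have JS: "J \<subseteq> S" "card J = card S - m" by auto
    then have fJ: "finite J" using fin finite_subset by blast
    show "S - (S - J) = J" using JS by auto
    show "S - J \<in> ?X" using JS fJ m by (simp add: card_Diff_subset)
  qed simp
  finally show ?thesis by (simp add: sig_def)
qed

lemma E_zero_big: "finite S \<Longrightarrow> card S < k \<Longrightarrow> E S k lam = 0"
  by (simp add: E_def sig_big)

lemma newton_distinct: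
  "finite S \<Longrightarrow> card S = n \<Longrightarrow> inj_on lam S \<Longrightarrow> 1 \<le> k \<Longrightarrow>
   E S (k - 1) lam * E S (Suc k) lam \<le> (E S k lam)\<^sup>2"
proof (induction n arbitrary: S lam k rule: less_induct)
  case (less n)
  note fin = less.prems(1) and cS = less.prems(2) and inj = less.prems(3) and k1 = less.prems(4)
  consider "n < Suc k" | "Suc k = n" | "Suc k < n" by linarith
  then show ?case
  proof cases
    case 1
    then have "E S (Suc k) lam = 0" using E_zero_big[OF fin] cS by simp
    then show ?thesis by simp
  next
    case 2
    then have n2: "n \<ge> 2" using k1 by simp
    show ?thesis
    proof (cases "\<exists>j\<in>S. lam j = 0")
      case True
      have "sig S n lam = (\<Prod>j\<in>S. lam j)" using sig_full[OF fin] cS by simp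
      also have "\<dots> = 0" using True fin by (simp add: prod_zero_iff)
      finally have "E S n lam = 0" by (simp add: E_def)
      then show ?thesis using 2 by simp
    next
      case False
      define p where "p = (\<Prod>j\<in>S. lam j)"
      have p0: "p \<noteq> 0" using False fin by (simp add: p_def prod_zero_iff)
      define x where "x = (\<lambda>j. 1 / lam j)"
      have r1: "sig S 1 x * p = sig S (n - 1) lam"
        using sig_recip[OF fin, of lam 1] False n2 cS by (simp add: x_def p_def)
      have r2: "sig S 2 x * p = sig S (n - 2) lam"
        using sig_recip[OF fin, of lam 2] False n2 cS by (simp add: x_def p_def)
      have En: "E S n lam = p" using sig_full[OF fin, of lam] cS by (simp add: E_def p_def)
      have cn1: "n choose (n - 1) = n choose 1" using n2 by (simp add: binomial_symmetric)
      have cn2: "n choose (n - 2) = n choose 2" using n2 by (metis binomial_symmetric diff_le_self le_add_diff_inverse2 numeral_le_iff)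
      have E1: "E S 1 x = E S (n - 1) lam / p"
      proof -
        have "E S 1 x = (sig S 1 x * p) / (real (n choose 1) * p)" unfolding E_def using p0 cS by simp
        then show ?thesis unfolding r1 E_def cS cn1 by simp
      qed
      have E2: "E S 2 x = E S (n - 2) lam / p"
      proof -
        have "E S 2 x = (sig S 2 x * p) / (real (n choose 2) * p)" unfolding E_def using p0 cS by simp
        then show ?thesis unfolding r2 E_def cS cn2 by simp
      qed
      have "E S (n - 2) lam / p \<le> (E S (n - 1) lam / p)\<^sup>2"
        using E_base[OF fin, of x] E1 E2 by simp
      then have "E S (n - 2) lam / p * p\<^sup>2 \<le> (E S (n - 1) lam / p)\<^sup>2 * p\<^sup>2"
        by (rule mult_right_mono) simp
      then have "E S (n - 2) lam * p \<le> (E S (n - 1) lam)\<^sup>2"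
        using p0 by (simp add: field_simps power2_eq_square)
      moreover have "k - 1 = n - 2" "k = n - 1" using 2 by auto
      ultimately show ?thesis using En 2 by simp
    qed
  next
    case 3
    then have n2: "n \<ge> 2" by simp
    obtain rho where injr: "inj_on rho {..<n-1}"
      and rel: "\<And>m. m \<le> n - 1 \<Longrightarrow> real n * sig {..<n-1} m rho = real (n - m) * sig S m lam"
      using rolle_step[OF fin cS n2 inj] by blast
    have EE: "E {..<n-1} m rho = E S m lam" if "m \<le> n - 1" for m
    proof -
      have b: "real (n - m) * real (n choose m) = real n * real (n - 1 choose m)"
        using binomial_absorb_comp[of n m] by (metis of_nat_mult)
      have pos1: "real (n - 1 choose m) > 0" using that by simp
      have pos2: "real (n - m) > 0" using that n2 by simp
      have "E {..<n-1} m rho = sig {..<n-1} m rho / real (n - 1 choose m)" by (simp add: E_def)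
      also have "\<dots> = real (n - m) * sig S m lam / (real n * real (n - 1 choose m))"
      proof -
        have "sig {..<n-1} m rho = real (n - m) * sig S m lam / real n"
          using rel[OF that] n2 by (simp add: field_simps)
        then show ?thesis by simp
      qed
      also have "\<dots> = real (n - m) * sig S m lam / (real (n - m) * real (n choose m))"
        using b by simp
      also have "\<dots> = E S m lam" using pos2 cS by (simp add: E_def)
      finally show ?thesis .
    qed
    have "E {..<n-1} (k - 1) rho * E {..<n-1} (Suc k) rho \<le> (E {..<n-1} k rho)\<^sup>2"
      using less.IH[of "n - 1" "{..<n-1}" rho k] injr k1 n2 by simp
    then show ?thesis using EE 3 by simp
  qed
qed

lemma newton:
  assumes fin: "finite S" and k1: "1 \<le> k"
  shows "E S (k - 1) lam * E S (Suc k) lam \<le> (E S k lam)\<^sup>2"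
proof (rule ccontr)
  assume neg: "\<not> ?thesis"
  define L where "L = (\<lambda>(e::real) j. lam j + e * real j)"
  define F where "F = (\<lambda>e. (E S k (L e))\<^sup>2 - E S (k - 1) (L e) * E S (Suc k) (L e))"
  have L0: "L 0 = lam" by (simp add: L_def)
  have F0: "F 0 < 0" using neg unfolding F_def L0 by simp
  have cont: "continuous_on UNIV F"
    unfolding F_def E_def sig_def L_def divide_inverse by (intro continuous_intros)
  have "open {e. F e < 0}"
    using cont by (simp add: open_Collect_less continuous_on_const)
  then obtain d where d: "d > 0" "ball 0 d \<subseteq> {e. F e < 0}"
    using F0 open_contains_ball_eq by blast
  define B where "B = (\<lambda>(i, j). (lam j - lam i) / (real i - real j)) ` (S \<times> S)"
  have finB: "finite B" unfolding B_def using fin by simp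
  have "infinite ({0<..<d} - B)" by (rule Diff_infinite_finite[OF finB infinite_Ioo[OF d(1)]])
  then have "{0<..<d} - B \<noteq> {}" by (metis finite.emptyI)
  then obtain e where e: "e \<in> {0<..<d}" "e \<notin> B" by blast
  have inj: "inj_on (L e) S"
  proof (rule inj_onI, rule ccontr)
    fix i j assume ij: "i \<in> S" "j \<in> S" "L e i = L e j" "i \<noteq> j"
    then have "real i - real j \<noteq> 0" by simp
    moreover have "e * (real i - real j) = lam j - lam i" using ij(3) by (simp add: L_def algebra_simps)
    ultimately have "e = (lam j - lam i) / (real i - real j)" by (simp add: field_simps)
    then have "e \<in> B" unfolding B_def using ij by force
    then show False using e by simp
  qed
  have "F e \<ge> 0" using newton_distinct[OF fin refl inj k1] unfolding F_def by simp
  moreover have "e \<in> ball 0 d" using e by (simp add: dist_norm)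
  ultimately show False using d by auto
qed

definition Gam :: "nat set \<Rightarrow> nat \<Rightarrow> (nat \<Rightarrow> real) \<Rightarrow> bool" where
  "Gam S k lam = (\<forall>j\<in>{1..k}. 0 < sig S j lam)"

lemma sig_cong: "(\<And>j. j \<in> S \<Longrightarrow> f j = g j) \<Longrightarrow> sig S k f = sig S k g"
  unfolding sig_def by (intro sum.cong refl prod.cong) auto

lemma binom_logconc:
  assumes "1 \<le> j"
  shows "real (m choose (j - 1)) * real (m choose Suc j) \<le> (real (m choose j))\<^sup>2"
proof (cases "j \<le> m")
  case False
  then show ?thesis by (simp add: binomial_eq_0)
next
  case True
  obtain i where ij: "j = Suc i" using assms by (cases j) auto
  have id: "real (Suc k) * real (m choose Suc k) = real (m - k) * real (m choose k)" for k
  proof -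
    have "Suc k * (m choose Suc k) = (m - k) * (m choose k)"
      using binomial_absorption[of k m] binomial_absorb_comp[of m k] by simp
    then show ?thesis by (metis of_nat_mult)
  qed
  let ?a = "real (m choose i)" and ?b = "real (m choose Suc i)" and ?c = "real (m choose Suc (Suc i))"
  have e1: "real (Suc i) * ?b = real (m - i) * ?a" by (rule id)
  have e2: "real (Suc (Suc i)) * ?c = real (m - Suc i) * ?b" by (rule id)
  have im: "Suc i \<le> m" using True ij by simp
  have "(real (Suc i) * real (Suc (Suc i))) * (?a * ?c) = (real (Suc i) * ?a) * (real (Suc (Suc i)) * ?c)"
    by (simp only: mult_ac)
  also have "\<dots> = (real (Suc i) * ?a) * (real (m - Suc i) * ?b)"
    by (simp only: e2)
  also have "\<dots> \<le> (real (Suc (Suc i)) * ?b) * (real (m - i) * ?a)"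
  proof -
    have "real (Suc i) * real (m - Suc i) \<le> real (Suc (Suc i)) * real (m - i)"
      using im by (simp add: of_nat_diff algebra_simps)
    then have "(real (Suc i) * real (m - Suc i)) * (?a * ?b) \<le> (real (Suc (Suc i)) * real (m - i)) * (?a * ?b)"
      by (rule mult_right_mono) simp
    then show ?thesis by (simp add: algebra_simps)
  qed
  also have "\<dots> = (real (Suc (Suc i)) * ?b) * (real (Suc i) * ?b)"
    by (simp only: e1)
  also have "\<dots> = (real (Suc i) * real (Suc (Suc i))) * ?b\<^sup>2"
    by (simp only: mult_ac power2_eq_square)
  finally have "(real (Suc i) * real (Suc (Suc i))) * (?a * ?c) \<le> (real (Suc i) * real (Suc (Suc i))) * ?b\<^sup>2" .
  then have "?a * ?c \<le> ?b\<^sup>2" by (rule mult_left_le_imp_le) simp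
  then show ?thesis using ij by simp
qed

lemma key_arith:
  fixes a b c x :: real
  assumes "a > 0" "b \<le> 0" "b + x * a > 0" "c + x * b > 0"
  shows "a * c > b\<^sup>2"
proof -
  have "x * a > - b" using assms by simp
  have h1: "c * a > (- x * b) * a" using assms by (intro mult_strict_right_mono) auto
  have h2: "(- x * b) * a = (x * a) * (- b)" by simp
  have h3: "(x * a) * (- b) \<ge> (- b) * (- b)" using \<open>x * a > - b\<close> assms by (intro mult_right_mono) auto
  have "c * a > b * b" using h1 h2 h3 by linarith
  then show ?thesis by (simp add: power2_eq_square mult.commute)
qed

lemma K_lemma:
  "finite S \<Longrightarrow> Gam S k lam \<Longrightarrow> i \<in> S \<Longrightarrow> j < k \<Longrightarrow> 0 < sig (S - {i}) j lam"
proof (induction k arbitrary: j)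
  case 0 then show ?case by simp
next
  case (Suc k)
  note fin = Suc.prems(1) and G = Suc.prems(2) and iS = Suc.prems(3)
  have Gk: "Gam S k lam" using G unfolding Gam_def by auto
  have finN: "finite (S - {i})" using fin by simp
  show ?case
  proof (cases "j < k")
    case True then show ?thesis using Suc.IH[OF fin Gk iS] by simp
  next
    case False
    then have jk: "j = k" using Suc.prems(4) by simp
    show ?thesis
    proof (cases k)
      case 0 then show ?thesis using jk finN by (simp add: sig_0)
    next
      case (Suc k')
      let ?N = "S - {i}"
      have Si: "S = insert i ?N" using iS by auto
      have iN: "i \<notin> ?N" by simp
      define a where "a = sig ?N k' lam"
      define b where "b = sig ?N k lam"
      define c where "c = sig ?N (Suc k) lam"
      have a0: "a > 0" unfolding a_def using Suc.IH[OF fin Gk iS, of k'] Suc by simp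
      have "sig S k lam = b + lam i * a"
        unfolding a_def b_def Suc using sig_insert[OF finN iN, of k' lam] Si by simp
      moreover have "sig S k lam > 0" using G Suc unfolding Gam_def by simp
      ultimately have h1: "b + lam i * a > 0" by simp
      have "sig S (Suc k) lam = c + lam i * b"
        unfolding b_def c_def using sig_insert[OF finN iN, of k lam] Si by simp
      moreover have "sig S (Suc k) lam > 0" using G unfolding Gam_def by simp
      ultimately have h2: "c + lam i * b > 0" by simp
      show ?thesis
      proof (rule ccontr)
        assume "\<not> ?thesis"
        then have b0: "b \<le> 0" unfolding b_def jk by simp
        have ac: "a * c > b\<^sup>2" using key_arith[OF a0 b0, of "lam i" c] h1 h2 by (simp add: mult.commute)
        have "a * c > 0" using ac by (meson le_less_trans zero_le_power2)
        then have c0: "c > 0" using a0 zero_less_mult_pos by blast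
        define m where "m = card ?N"
        have km: "Suc k \<le> m"
        proof (rule ccontr)
          assume "\<not> Suc k \<le> m"
          then have "c = 0" unfolding c_def m_def using sig_big[OF finN] by simp
          then show False using c0 by simp
        qed
        have C0: "real (m choose k') > 0" "real (m choose k) > 0" "real (m choose Suc k) > 0"
          using km Suc by auto
        have nw: "E ?N (k - 1) lam * E ?N (Suc k) lam \<le> (E ?N k lam)\<^sup>2"
          using newton[OF finN, of k lam] Suc by simp
        then have "(a / real (m choose k')) * (c / real (m choose Suc k)) \<le> (b / real (m choose k))\<^sup>2"
          unfolding E_def a_def b_def c_def m_def Suc by simp
        then have "a * c * (real (m choose k))\<^sup>2 \<le> b\<^sup>2 * (real (m choose k') * real (m choose Suc k))"
          using C0 by (simp add: field_simps power2_eq_square)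
        also have "\<dots> \<le> b\<^sup>2 * (real (m choose k))\<^sup>2"
          using binom_logconc[of k m] Suc by (intro mult_left_mono) auto
        finally have "a * c \<le> b\<^sup>2" using C0 by simp
        then show False using ac by simp
      qed
    qed
  qed
qed

lemma sig_remove:
  assumes "finite S" "i \<in> S"
  shows "sig S (Suc j) lam = sig (S - {i}) (Suc j) lam + lam i * sig (S - {i}) j lam"
proof -
  have "S = insert i (S - {i})" using assms by auto
  then show ?thesis using sig_insert[of "S - {i}" i j lam] assms by simp
qed

lemma mono_step:
  assumes fin: "finite S" and iS: "i \<in> S" and G: "Gam S k lam" and t: "t \<ge> 0"
  shows "\<forall>j\<in>{1..k}. sig S j lam \<le> sig S j (lam(i := lam i + t))"
proof
  fix j assume j: "j \<in> {1..k}"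
  then obtain j' where j': "j = Suc j'" by (cases j) auto
  let ?l = "lam(i := lam i + t)"
  have same: "sig (S - {i}) m ?l = sig (S - {i}) m lam" for m by (rule sig_cong) auto
  have pos: "0 < sig (S - {i}) j' lam" using K_lemma[OF fin G iS, of j'] j j' by simp
  have "sig S j ?l = sig S j lam + t * sig (S - {i}) j' lam"
    unfolding j' sig_remove[OF fin iS] same by (simp add: algebra_simps)
  then show "sig S j lam \<le> sig S j ?l" using pos t by simp
qed

lemma mono_gen:
  assumes fin: "finite S" and G: "Gam S k lam"
  shows "finite F \<Longrightarrow> \<forall>i\<in>S. lam i \<le> mu i \<Longrightarrow> (\<forall>i\<in>S - F. mu i = lam i) \<Longrightarrow> Gam S k mu \<and> sig S k lam \<le> sig S k mu"
proof (induction F arbitrary: mu rule: finite_induct)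
  case empty
  have "sig S j mu = sig S j lam" for j using empty by (intro sig_cong) auto
  then show ?case using G unfolding Gam_def by simp
next
  case (insert a F)
  note le = insert.prems(1)
  define mu' where "mu' = mu(a := lam a)"
  have "\<forall>i\<in>S - F. mu' i = lam i" using insert.prems(2) unfolding mu'_def by auto
  moreover have "\<forall>i\<in>S. lam i \<le> mu' i" using le unfolding mu'_def by auto
  ultimately have IH: "Gam S k mu' \<and> sig S k lam \<le> sig S k mu'"
    using insert.IH by blast
  show ?case
  proof (cases "a \<in> S")
    case False
    have "sig S j mu = sig S j mu'" for j using False by (intro sig_cong) (auto simp: mu'_def)
    then show ?thesis using IH unfolding Gam_def by simp
  next
    case True
    have eq: "mu = mu'(a := mu' a + (mu a - lam a))" unfolding mu'_def by auto
    have t: "mu a - lam a \<ge> 0" using le True by simp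
    have st: "\<forall>j\<in>{1..k}. sig S j mu' \<le> sig S j mu"
      using mono_step[OF fin True conjunct1[OF IH] t] eq by metis
    have "Gam S k mu" using IH st unfolding Gam_def by (meson less_le_trans)
    moreover have "sig S k lam \<le> sig S k mu"
    proof (cases "k = 0")
      case True then show ?thesis using fin by (simp add: sig_0)
    next
      case False
      then have "k \<in> {1..k}" by simp
      then show ?thesis using st IH by (meson order_trans)
    qed
    ultimately show ?thesis by simp
  qed
qed

lemma sig_mono:
  assumes "finite S" "Gam S k lam" "\<forall>i\<in>S. lam i \<le> mu i"
  shows "sig S k lam \<le> sig S k mu"
  using mono_gen[OF assms(1,2), of S mu] assms by simp

lemma sig_reindex:
  assumes fin: "finite S" and bij: "bij_betw p S T"
  shows "sig T k mu = sig S k (\<lambda>i. mu (p i))"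
proof -
  have inj: "inj_on p S" and img: "p ` S = T" using bij by (auto simp: bij_betw_def)
  let ?X = "{I. I \<subseteq> S \<and> card I = k}" and ?Y = "{J. J \<subseteq> T \<and> card J = k}"
  have injX: "inj_on (image p) ?X"
    by (rule inj_onI) (use inj_on_image_eq_iff[OF inj] in auto)
  have imX: "image p ` ?X = ?Y"
  proof
    show "image p ` ?X \<subseteq> ?Y"
    proof
      fix J assume "J \<in> image p ` ?X"
      then obtain I where I: "I \<subseteq> S" "card I = k" "J = p ` I" by auto
      have "card (p ` I) = card I" by (intro card_image inj_on_subset[OF inj I(1)])
      then show "J \<in> ?Y" using I img by auto
    qed
  next
    show "?Y \<subseteq> image p ` ?X"
    proof
      fix J assume J: "J \<in> ?Y"
      define I where "I = {i\<in>S. p i \<in> J}"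
      have "J \<subseteq> p ` S" using J img by simp
      then have "p ` I = J" unfolding I_def by blast
      moreover have IS: "I \<subseteq> S" unfolding I_def by blast
      moreover have "card (p ` I) = card I" using IS by (intro card_image inj_on_subset[OF inj])
      ultimately have "I \<in> ?X" using J by simp
      then show "J \<in> image p ` ?X" using \<open>p ` I = J\<close> by blast
    qed
  qed
  have "sig T k mu = (\<Sum>J\<in>image p ` ?X. \<Prod>j\<in>J. mu j)" unfolding sig_def imX ..
  also have "\<dots> = (\<Sum>I\<in>?X. \<Prod>j\<in>p ` I. mu j)" using sum.reindex[OF injX] by simp
  also have "\<dots> = (\<Sum>I\<in>?X. \<Prod>i\<in>I. mu (p i))"
  proof (rule sum.cong[OF refl])
    fix I assume "I \<in> ?X"
    then have "inj_on p I" using inj_on_subset[OF inj] by auto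
    then show "(\<Prod>j\<in>p ` I. mu j) = (\<Prod>i\<in>I. mu (p i))" by (simp add: prod.reindex)
  qed
  finally show ?thesis unfolding sig_def .
qed

lemma sig_scale: "sig S k (\<lambda>i. c * mu i) = c ^ k * sig S k mu"
  unfolding sig_def sum_distrib_left
  by (intro sum.cong refl) (simp add: prod.distrib)

lemma matching:
  fixes lam mu :: "nat \<Rightarrow> real" and S T :: "nat set"
  shows "finite S \<Longrightarrow> finite T \<Longrightarrow> card S = n \<Longrightarrow> card T = n \<Longrightarrow>
   (\<forall>t. card {i\<in>S. t \<le> lam i} \<le> card {j\<in>T. t \<le> mu j}) \<Longrightarrow>
   \<exists>p. bij_betw p S T \<and> (\<forall>i\<in>S. lam i \<le> mu (p i))"
proof (induction n arbitrary: S T)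
  case 0
  then have "S = {}" "T = {}" by auto
  then show ?case by (auto simp: bij_betw_def)
next
  case (Suc n)
  note finS = Suc.prems(1) and finT = Suc.prems(2) and cnt = Suc.prems(5)
  have neS: "S \<noteq> {}" and neT: "T \<noteq> {}" using Suc.prems by auto
  have "Max (lam ` S) \<in> lam ` S" using finS neS by (intro Max_in) auto
  then obtain i where iS: "i \<in> S" and ieq: "lam i = Max (lam ` S)" by auto
  have imax: "\<forall>j\<in>S. lam j \<le> lam i" unfolding ieq using finS by simp
  have "Max (mu ` T) \<in> mu ` T" using finT neT by (intro Max_in) auto
  then obtain l where lT: "l \<in> T" and leq: "mu l = Max (mu ` T)" by auto
  have lmax: "\<forall>j\<in>T. mu j \<le> mu l" unfolding leq using finT by simp
  have il: "lam i \<le> mu l"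
  proof -
    have "0 < card {j\<in>S. lam i \<le> lam j}" using iS finS by (auto simp: card_gt_0_iff)
    also have "\<dots> \<le> card {j\<in>T. lam i \<le> mu j}" using cnt by blast
    finally have "{j\<in>T. lam i \<le> mu j} \<noteq> {}" by (metis card.empty less_irrefl)
    then obtain l' where "l' \<in> T" "lam i \<le> mu l'" by auto
    then show ?thesis using lmax by (meson order_trans)
  qed
  let ?S = "S - {i}" and ?T = "T - {l}"
  have cnt': "card {j\<in>?S. t \<le> lam j} \<le> card {j\<in>?T. t \<le> mu j}" for t
  proof (cases "t \<le> lam i")
    case True
    have e1: "{j\<in>?S. t \<le> lam j} = {j\<in>S. t \<le> lam j} - {i}" by auto
    have e2: "{j\<in>?T. t \<le> mu j} = {j\<in>T. t \<le> mu j} - {l}" by auto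
    have "i \<in> {j\<in>S. t \<le> lam j}" using iS True by simp
    moreover have "l \<in> {j\<in>T. t \<le> mu j}" using lT True il by simp
    ultimately show ?thesis unfolding e1 e2 using cnt[rule_format, of t] finS finT
      by (simp add: card_Diff_singleton)
  next
    case False
    then have e: "{j\<in>?S. t \<le> lam j} = {}" using imax by force
    show ?thesis unfolding e by simp
  qed
  obtain p where p: "bij_betw p ?S ?T" "\<forall>j\<in>?S. lam j \<le> mu (p j)"
    using Suc.IH[of ?S ?T] finS finT Suc.prems(3,4) iS lT cnt' by auto
  define q where "q = p(i := l)"
  have "bij_betw q S T"
  proof -
    have bq: "bij_betw q ?S ?T" using p(1) unfolding q_def by (rule bij_betw_cong[THEN iffD1, rotated]) auto
    have "bij_betw q (insert i ?S) (insert l ?T)"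
      using bq unfolding bij_betw_def q_def by (auto simp: inj_on_def)
    moreover have "insert i ?S = S" "insert l ?T = T" using iS lT by auto
    ultimately show ?thesis by simp
  qed
  moreover have "\<forall>j\<in>S. lam j \<le> mu (q j)" using p(2) il unfolding q_def by auto
  ultimately show ?case by blast
qed

lemma frame_props:
  assumes "tangent_frame x e" "i \<in> {1..DIM('a) - 1}" "j \<in> {1..DIM('a) - 1}"
  shows "e i \<bullet> (x::'a::euclidean_space) = 0" "e i \<bullet> e j = (if i = j then 1 else 0)"
  using assms unfolding tangent_frame_def by auto

lemma frame_inj:
  assumes "tangent_frame (x::'a::euclidean_space) e"
  shows "inj_on e {1..DIM('a) - 1}"
proof (rule inj_onI, rule ccontr)
  fix i j assume ij: "i \<in> {1..DIM('a) - 1}" "j \<in> {1..DIM('a) - 1}" "e i = e j" "i \<noteq> j"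
  then have "e i \<bullet> e j = 0" using frame_props(2)[OF assms ij(1) ij(2)] by simp
  moreover have "e i \<bullet> e i = 1" using frame_props(2)[OF assms ij(1) ij(1)] by simp
  ultimately show False using ij(3) by simp
qed

lemma frame_coord:
  assumes tf: "tangent_frame (x::'a::euclidean_space) e" and I: "I \<subseteq> {1..DIM('a) - 1}" and j: "j \<in> I"
  shows "(\<Sum>i\<in>I. c i *\<^sub>R e i) \<bullet> e j = c j"
proof -
  have fin: "finite I" using I finite_subset by blast
  have "(\<Sum>i\<in>I. c i *\<^sub>R e i) \<bullet> e j = (\<Sum>i\<in>I. c i * (e i \<bullet> e j))"
    by (simp add: inner_sum_left)
  also have "\<dots> = (\<Sum>i\<in>I. if i = j then c i else 0)"
  proof (rule sum.cong[OF refl])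
    fix i assume "i \<in> I"
    then have "i \<in> {1..DIM('a) - 1}" "j \<in> {1..DIM('a) - 1}" using I j by auto
    from frame_props(2)[OF tf this] show "c i * (e i \<bullet> e j) = (if i = j then c i else 0)" by simp
  qed
  also have "\<dots> = c j" using fin j by simp
  finally show ?thesis .
qed

lemma frame_norm2:
  assumes tf: "tangent_frame (x::'a::euclidean_space) e" and I: "I \<subseteq> {1..DIM('a) - 1}"
  shows "(\<Sum>i\<in>I. c i *\<^sub>R e i) \<bullet> (\<Sum>i\<in>I. c i *\<^sub>R e i) = (\<Sum>i\<in>I. (c i)\<^sup>2)"
proof -
  have "(\<Sum>i\<in>I. c i *\<^sub>R e i) \<bullet> (\<Sum>i\<in>I. c i *\<^sub>R e i) = (\<Sum>j\<in>I. c j * ((\<Sum>i\<in>I. c i *\<^sub>R e i) \<bullet> e j))"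
    by (simp add: inner_sum_right)
  also have "\<dots> = (\<Sum>j\<in>I. (c j)\<^sup>2)"
    by (intro sum.cong refl) (use frame_coord[OF tf I] in \<open>simp add: power2_eq_square\<close>)
  finally show ?thesis .
qed

lemma frame_tangent:
  assumes tf: "tangent_frame (x::'a::euclidean_space) e" and I: "I \<subseteq> {1..DIM('a) - 1}"
  shows "(\<Sum>i\<in>I. c i *\<^sub>R e i) \<bullet> x = 0"
  using frame_props(1)[OF tf] I by (auto simp: inner_sum_left intro!: sum.neutral)

lemma bilin_quad:
  fixes A :: "'a::euclidean_space \<Rightarrow> 'a \<Rightarrow> real"
  assumes l1: "\<And>w. linear (\<lambda>v. A v w)" and l2: "\<And>v. linear (A v)"
    and I: "I \<subseteq> {1..DIM('a) - 1}"
    and diag: "\<And>i j. i \<in> {1..DIM('a) - 1} \<Longrightarrow> j \<in> {1..DIM('a) - 1} \<Longrightarrow> A (e i) (e j) = (if i = j then lam i else 0)"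
  shows "A (\<Sum>i\<in>I. c i *\<^sub>R e i) (\<Sum>i\<in>I. c i *\<^sub>R e i) = (\<Sum>i\<in>I. (c i)\<^sup>2 * lam i)"
proof -
  have fin: "finite I" using I finite_subset by blast
  let ?v = "\<Sum>i\<in>I. c i *\<^sub>R e i"
  have "A ?v ?v = (\<Sum>i\<in>I. c i * A (e i) ?v)"
    using linear_sum[OF l1[of ?v], of "\<lambda>i. c i *\<^sub>R e i" I] linear_scale[OF l1[of ?v]] by simp
  also have "\<dots> = (\<Sum>i\<in>I. c i * (\<Sum>j\<in>I. c j * A (e i) (e j)))"
  proof (rule sum.cong[OF refl])
    fix i assume "i \<in> I"
    show "c i * A (e i) ?v = c i * (\<Sum>j\<in>I. c j * A (e i) (e j))"
      using linear_sum[OF l2[of "e i"], of "\<lambda>i. c i *\<^sub>R e i" I] linear_scale[OF l2[of "e i"]] by simp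
  qed
  also have "\<dots> = (\<Sum>i\<in>I. (c i)\<^sup>2 * lam i)"
  proof (rule sum.cong[OF refl])
    fix i assume i: "i \<in> I"
    have "(\<Sum>j\<in>I. c j * A (e i) (e j)) = (\<Sum>j\<in>I. if j = i then c i * lam i else 0)"
    proof (rule sum.cong[OF refl])
      fix j assume "j \<in> I"
      then have "i \<in> {1..DIM('a) - 1}" "j \<in> {1..DIM('a) - 1}" using I i by auto
      from diag[OF this] show "c j * A (e i) (e j) = (if j = i then c i * lam i else 0)" by auto
    qed
    also have "\<dots> = c i * lam i" using fin i by simp
    finally show "c i * (\<Sum>j\<in>I. c j * A (e i) (e j)) = (c i)\<^sup>2 * lam i"
      by (simp add: power2_eq_square)
  qed
  finally show ?thesis .
qed

lemma span_frame_expand: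
  assumes tf: "tangent_frame (x::'a::euclidean_space) e" and I: "I \<subseteq> {1..DIM('a) - 1}"
    and v: "v \<in> span (e ` I)"
  shows "v = (\<Sum>i\<in>I. (v \<bullet> e i) *\<^sub>R e i)"
proof -
  have fin: "finite I" using I finite_subset by blast
  have inj: "inj_on e I" using frame_inj[OF tf] I inj_on_subset by blast
  obtain u where "v = (\<Sum>w\<in>e ` I. u w *\<^sub>R w)" using v span_finite[of "e ` I"] fin by auto
  then have vu: "v = (\<Sum>i\<in>I. u (e i) *\<^sub>R e i)" using sum.reindex[OF inj] by simp
  have "v \<bullet> e j = u (e j)" if "j \<in> I" for j using frame_coord[OF tf I that] vu by simp
  then show ?thesis using vu by (metis (no_types, lifting) sum.cong)
qed

lemma full_expand:
  assumes x: "norm (x::'a::euclidean_space) = 1" and tf: "tangent_frame x f" and v: "v \<bullet> x = 0"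
  shows "v = (\<Sum>j\<in>{1..DIM('a) - 1}. (v \<bullet> f j) *\<^sub>R f j)"
proof -
  let ?N = "{1..DIM('a) - 1}"
  define B where "B = insert x (f ` ?N)"
  have xx: "x \<bullet> x = 1" using x by (simp add: norm_eq_1)
  have xnot: "x \<notin> f ` ?N"
  proof
    assume "x \<in> f ` ?N"
    then obtain i where "i \<in> ?N" "x = f i" by auto
    then show False using frame_props(1)[OF tf] xx by auto
  qed
  have cB: "card B = DIM('a)"
  proof -
    have "card (f ` ?N) = DIM('a) - 1" using card_image[OF frame_inj[OF tf]] by simp
    moreover have "DIM('a) \<ge> 1" using DIM_positive[where 'a='a] by linarith
    ultimately show ?thesis unfolding B_def using xnot by simp
  qed
  have orth: "pairwise orthogonal B"
    unfolding B_def pairwise_def orthogonal_def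
    using frame_props[OF tf] by (auto simp: inner_commute)
  have n0: "0 \<notin> B" unfolding B_def using xx frame_props(2)[OF tf] by force
  have ind: "independent B" by (rule pairwise_orthogonal_independent[OF orth n0])
  have finB: "finite B" unfolding B_def by simp
  have spB: "UNIV \<subseteq> span B" using card_eq_dim[of B UNIV] ind cB finB by simp
  define r where "r = v - (\<Sum>j\<in>?N. (v \<bullet> f j) *\<^sub>R f j)"
  have "orthogonal r b" if bB: "b \<in> B" for b
  proof -
    have rfx: "(\<Sum>j\<in>?N. (v \<bullet> f j) *\<^sub>R f j) \<bullet> x = 0" by (rule frame_tangent[OF tf]) simp
    show ?thesis
    proof (cases "b = x")
      case True then show ?thesis using v rfx by (simp add: r_def orthogonal_def inner_diff_left)
    next
      case False
      then obtain l where l: "l \<in> ?N" "b = f l" using bB unfolding B_def by auto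
      have "(\<Sum>j\<in>?N. (v \<bullet> f j) *\<^sub>R f j) \<bullet> f l = v \<bullet> f l" by (rule frame_coord[OF tf _ l(1)]) simp
      then show ?thesis using l by (simp add: r_def orthogonal_def inner_diff_left)
    qed
  qed
  then have "orthogonal r r" using spB by (intro orthogonal_to_span[of r B r]) auto
  then have "r = 0" by (simp add: orthogonal_def)
  then show ?thesis unfolding r_def by simp
qed

lemma count_le:
  fixes A B :: "'a::euclidean_space \<Rightarrow> 'a \<Rightarrow> real"
  assumes x: "norm x = 1" and tfe: "tangent_frame x e" and tff: "tangent_frame x f"
    and lA1: "\<And>w. linear (\<lambda>v. A v w)" and lA2: "\<And>v. linear (A v)"
    and lB1: "\<And>w. linear (\<lambda>v. B v w)" and lB2: "\<And>v. linear (B v)"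
    and dA: "\<And>i j. i \<in> {1..DIM('a) - 1} \<Longrightarrow> j \<in> {1..DIM('a) - 1} \<Longrightarrow> A (e i) (e j) = (if i = j then lam i else 0)"
    and dB: "\<And>i j. i \<in> {1..DIM('a) - 1} \<Longrightarrow> j \<in> {1..DIM('a) - 1} \<Longrightarrow> B (f i) (f j) = (if i = j then mu i else 0)"
    and le: "\<And>v. A v v \<le> B v v"
  shows "card {i\<in>{1..DIM('a) - 1}. t \<le> lam i} \<le> card {j\<in>{1..DIM('a) - 1}. t \<le> mu j}"
proof (rule ccontr)
  let ?N = "{1..DIM('a) - 1}"
  define I where "I = {i\<in>?N. t \<le> lam i}"
  define J where "J = {j\<in>?N. t \<le> mu j}"
  assume "\<not> ?thesis"
  then have cIJ: "card J < card I" unfolding I_def J_def by simp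
  have IN: "I \<subseteq> ?N" and JN: "J \<subseteq> ?N" unfolding I_def J_def by auto
  have finI: "finite I" and finJ: "finite J" using IN JN finite_subset by auto
  define g where "g = (\<lambda>v. \<Sum>j\<in>J. (v \<bullet> f j) *\<^sub>R f j)"
  have lg: "linear g"
    by (rule linearI) (simp_all add: g_def inner_add_left scaleR_add_left sum.distrib scaleR_sum_right)
  have "\<exists>v\<in>span (e ` I). v \<noteq> 0 \<and> g v = 0"
  proof (rule ccontr)
    assume "\<not> ?thesis"
    then have nz: "\<And>v. v \<in> span (e ` I) \<Longrightarrow> g v = 0 \<Longrightarrow> v = 0" by blast
    have inj: "inj_on g (span (e ` I))"
    proof (rule inj_onI)
      fix v w assume vw: "v \<in> span (e ` I)" "w \<in> span (e ` I)" "g v = g w"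
      then have "g (v - w) = 0" using linear_diff[OF lg] by simp
      moreover have "v - w \<in> span (e ` I)" using vw by (simp add: span_diff)
      ultimately show "v = w" using nz by fastforce
    qed
    have indI: "independent (e ` I)"
    proof (rule pairwise_orthogonal_independent)
      show "pairwise orthogonal (e ` I)"
        unfolding pairwise_def orthogonal_def using frame_props(2)[OF tfe] IN by fastforce
      show "0 \<notin> e ` I"
      proof
        assume "0 \<in> e ` I"
        then obtain i where "i \<in> I" "e i = 0" by auto
        then show False using frame_props(2)[OF tfe, of i i] IN by auto
      qed
    qed
    have "card I = card (e ` I)" using card_image[of e I] frame_inj[OF tfe] IN inj_on_subset by metis
    also have "\<dots> = dim (e ` I)" using dim_eq_card_independent[OF indI] by simp
    also have "\<dots> = dim (g ` (e ` I))" using dim_image_eq[OF lg inj] by simp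
    also have "\<dots> \<le> card (f ` J)"
    proof (rule dim_le_card)
      show "g ` e ` I \<subseteq> span (f ` J)"
      proof
        fix y assume "y \<in> g ` e ` I"
        then obtain v where "y = g v" by auto
        have "(\<Sum>j\<in>J. (v \<bullet> f j) *\<^sub>R f j) \<in> span (f ` J)"
        proof (rule span_sum)
          fix j assume "j \<in> J"
          then show "(v \<bullet> f j) *\<^sub>R f j \<in> span (f ` J)" by (intro span_scale span_base) simp
        qed
        then show "y \<in> span (f ` J)" unfolding g_def \<open>y = g v\<close> .
      qed
    qed (use finJ in simp)
    also have "\<dots> \<le> card J" using finJ by (rule card_image_le)
    finally show False using cIJ by simp
  qed
  then obtain v where v: "v \<in> span (e ` I)" "v \<noteq> 0" "g v = 0" by blast
  have vfJ: "v \<bullet> f l = 0" if l: "l \<in> J" for l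
  proof -
    have "g v \<bullet> f l = v \<bullet> f l" unfolding g_def by (rule frame_coord[OF tff JN l])
    then show ?thesis using v(3) by simp
  qed
  define a where "a = (\<lambda>i. v \<bullet> e i)"
  have va: "v = (\<Sum>i\<in>I. a i *\<^sub>R e i)" unfolding a_def by (rule span_frame_expand[OF tfe IN v(1)])
  have vx: "v \<bullet> x = 0" using frame_tangent[OF tfe IN] va by metis
  have vv1: "v \<bullet> v = (\<Sum>i\<in>I. (a i)\<^sup>2)" using frame_norm2[OF tfe IN] va by metis
  have Avv: "A v v = (\<Sum>i\<in>I. (a i)\<^sup>2 * lam i)" using bilin_quad[OF lA1 lA2 IN dA] va by metis
  have "A v v \<ge> t * (v \<bullet> v)"
  proof -
    have "t * (v \<bullet> v) = (\<Sum>i\<in>I. (a i)\<^sup>2 * t)" unfolding vv1 by (simp add: sum_distrib_left mult.commute)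
    also have "\<dots> \<le> (\<Sum>i\<in>I. (a i)\<^sup>2 * lam i)"
      by (intro sum_mono mult_left_mono) (auto simp: I_def)
    finally show ?thesis using Avv by simp
  qed
  define c where "c = (\<lambda>j. v \<bullet> f j)"
  have vc: "v = (\<Sum>j\<in>?N. c j *\<^sub>R f j)" unfolding c_def by (rule full_expand[OF x tff vx])
  have vv2: "v \<bullet> v = (\<Sum>j\<in>?N. (c j)\<^sup>2)" using frame_norm2[OF tff, of ?N c] vc by simp
  have Bvv: "B v v = (\<Sum>j\<in>?N. (c j)\<^sup>2 * mu j)" using bilin_quad[OF lB1 lB2 _ dB, of ?N c] vc by simp
  have "B v v < t * (v \<bullet> v)"
  proof -
    have cex: "\<exists>j\<in>?N. c j \<noteq> 0"
    proof (rule ccontr)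
      assume "\<not> ?thesis"
      then have "v = 0" using vc by simp
      then show False using v(2) by simp
    qed
    then obtain j0 where j0: "j0 \<in> ?N" "c j0 \<noteq> 0" by blast
    have j0J: "j0 \<notin> J" using vfJ j0 unfolding c_def by auto
    have "0 < (\<Sum>j\<in>?N. (c j)\<^sup>2 * (t - mu j))"
    proof (rule sum_pos2[OF _ j0(1)])
      show "0 < (c j0)\<^sup>2 * (t - mu j0)" using j0 j0J unfolding J_def by simp
      show "\<And>j. j \<in> ?N \<Longrightarrow> 0 \<le> (c j)\<^sup>2 * (t - mu j)"
      proof -
        fix j assume jN: "j \<in> ?N"
        show "0 \<le> (c j)\<^sup>2 * (t - mu j)"
        proof (cases "j \<in> J")
          case True then show ?thesis using vfJ unfolding c_def by simp
        next
          case False then show ?thesis using jN unfolding J_def by simp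
        qed
      qed
    qed simp
    then show ?thesis unfolding Bvv vv2 by (simp add: sum_subtractf sum_distrib_left algebra_simps)
  qed
  then show False using le[of v] \<open>A v v \<ge> t * (v \<bullet> v)\<close> by simp
qed

lemma line_deriv: "((\<lambda>t::real. x0 + t *\<^sub>R (v::'a::real_normed_vector)) has_derivative (\<lambda>s. s *\<^sub>R v)) (at t)"
  by (auto intro!: derivative_eq_intros)

lemma second_order:
  fixes g :: "'a::euclidean_space \<Rightarrow> real"
  assumes S: "open S" and x0: "x0 \<in> S" and mx: "\<forall>y\<in>S. g y \<le> g x0"
    and der: "\<And>y. y \<in> S \<Longrightarrow> (g has_derivative G y) (at y)"
    and der2: "((\<lambda>y. G y v) has_derivative H) (at x0)"
  shows "H v \<le> 0"
proof (rule ccontr)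
  assume "\<not> ?thesis"
  then have Hp: "H v > 0" by simp
  have G0: "G x0 = (\<lambda>v. 0)" using differential_zero_maxmin[OF x0 S der[OF x0]] mx by blast
  obtain r where r: "r > 0" "ball x0 r \<subseteq> S" using S x0 open_contains_ball_eq by blast
  have nv: "norm v + 1 > 0" using norm_ge_zero[of v] by linarith
  define d where "d = r / (norm v + 1)"
  have d: "d > 0" unfolding d_def using r nv by simp
  have inS: "x0 + t *\<^sub>R v \<in> S" if "\<bar>t\<bar> < d" for t
  proof -
    have "norm (t *\<^sub>R v) = \<bar>t\<bar> * norm v" by simp
    also have "\<dots> \<le> \<bar>t\<bar> * (norm v + 1)" by (simp add: mult_left_mono)
    also have "\<dots> < d * (norm v + 1)"
      using that nv by (intro mult_strict_right_mono) auto
    also have "\<dots> = r" unfolding d_def using nv by simp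
    finally have "x0 + t *\<^sub>R v \<in> ball x0 r" by (simp add: dist_norm)
    then show ?thesis using r by blast
  qed
  define phi where "phi = (\<lambda>t::real. G (x0 + t *\<^sub>R v) v)"
  define psi where "psi = (\<lambda>t::real. g (x0 + t *\<^sub>R v))"
  have dpsi: "(psi has_real_derivative phi t) (at t)" if "\<bar>t\<bar> < d" for t
  proof -
    have gd: "(g has_derivative G (x0 + t *\<^sub>R v)) (at (x0 + t *\<^sub>R v))" using der inS that by blast
    have bl: "linear (G (x0 + t *\<^sub>R v))" using has_derivative_linear[OF gd] .
    have "(psi has_derivative (\<lambda>s. G (x0 + t *\<^sub>R v) (s *\<^sub>R v))) (at t)"
      unfolding psi_def using has_derivative_compose[OF line_deriv gd] .
    moreover have "(\<lambda>s. G (x0 + t *\<^sub>R v) (s *\<^sub>R v)) = (\<lambda>s. phi t * s)"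
      unfolding phi_def using linear_scale[OF bl] by (auto simp: mult.commute)
    ultimately show ?thesis by (simp add: has_field_derivative_def)
  qed
  have dphi: "(phi has_real_derivative H v) (at 0)"
  proof -
    have bl: "linear H" using has_derivative_linear[OF der2] .
    have d2: "((\<lambda>y. G y v) has_derivative H) (at (x0 + 0 *\<^sub>R v))" using der2 by simp
    have "(phi has_derivative (\<lambda>s. H (s *\<^sub>R v))) (at 0)"
      unfolding phi_def using has_derivative_compose[OF line_deriv d2] .
    moreover have "(\<lambda>s. H (s *\<^sub>R v)) = (\<lambda>s. H v * s)"
      using linear_scale[OF bl] by (auto simp: mult.commute)
    ultimately show ?thesis by (simp add: has_field_derivative_def)
  qed
  have phi0: "phi 0 = 0" unfolding phi_def using G0 by simp
  obtain e where e: "e > 0" "\<And>h. h > 0 \<Longrightarrow> h < e \<Longrightarrow> phi 0 < phi (0 + h)"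
    using DERIV_pos_inc_right[OF dphi Hp] by blast
  define h where "h = min e d / 2"
  have h: "h > 0" "h < e" "h < d" unfolding h_def using e(1) d by auto
  obtain z where z: "0 < z" "z < h" "psi h - psi 0 = (h - 0) * phi z"
    using MVT2[OF h(1), of psi phi] dpsi h by force
  have "phi z > 0" using e(2)[of z] z h phi0 by simp
  then have "psi h > psi 0" using z h by (simp add: algebra_simps)
  moreover have "psi h \<le> psi 0" unfolding psi_def using mx inS[of h] h by simp
  ultimately show False by simp
qed

lemma open_punctured: "open (punctured :: 'a::euclidean_space set)"
  unfolding punctured_def by (simp add: open_Compl)

lemma C2_facts:
  fixes F :: "'a::euclidean_space \<Rightarrow> real"
  assumes "Ck_on 2 punctured F"
  shows "continuous_on punctured F"
    and "\<And>y. y \<in> punctured \<Longrightarrow> (F has_derivative frechet_derivative F (at y)) (at y)"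
    and "\<And>y v. y \<in> punctured \<Longrightarrow> ((\<lambda>z. frechet_derivative F (at z) v) has_derivative
            frechet_derivative (\<lambda>z. frechet_derivative F (at z) v) (at y)) (at y)"
proof -
  have C: "continuous_on punctured F \<and> F differentiable_on punctured \<and>
      (\<forall>v. continuous_on punctured (\<lambda>z. frechet_derivative F (at z) v) \<and>
           (\<lambda>z. frechet_derivative F (at z) v) differentiable_on punctured \<and>
           (\<forall>w. Ck_on 0 punctured (\<lambda>y. frechet_derivative (\<lambda>z. frechet_derivative F (at z) v) (at y) w)))"
    using assms by (simp add: numeral_2_eq_2)
  then show "continuous_on punctured F" by simp
  show "\<And>y. y \<in> punctured \<Longrightarrow> (F has_derivative frechet_derivative F (at y)) (at y)"
    using C differentiable_on_eq_differentiable_at[OF open_punctured] frechet_derivative_works by blast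
  show "\<And>y v. y \<in> punctured \<Longrightarrow> ((\<lambda>z. frechet_derivative F (at z) v) has_derivative
            frechet_derivative (\<lambda>z. frechet_derivative F (at z) v) (at y)) (at y)"
    using C differentiable_on_eq_differentiable_at[OF open_punctured] frechet_derivative_works by blast
qed

lemma hess_lin1:
  fixes u :: "'a::euclidean_space \<Rightarrow> real"
  assumes C: "Ck_on 2 punctured (hom0 u)" and x: "x \<in> punctured"
  shows "linear (sph_hess u x v)"
proof -
  have "((\<lambda>z. frechet_derivative (hom0 u) (at z) v) has_derivative
            frechet_derivative (\<lambda>z. frechet_derivative (hom0 u) (at z) v) (at x)) (at x)"
    using C2_facts(3)[OF C x] .
  then show ?thesis unfolding sph_hess_def[abs_def] by (rule has_derivative_linear)
qed

lemma hess_lin2: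
  fixes u :: "'a::euclidean_space \<Rightarrow> real"
  assumes C: "Ck_on 2 punctured (hom0 u)" and x: "x \<in> punctured"
  shows "linear (\<lambda>v. sph_hess u x v w)"
proof -
  let ?D = "\<lambda>z. frechet_derivative (hom0 u) (at z)"
  let ?H = "\<lambda>v. frechet_derivative (\<lambda>z. ?D z v) (at x)"
  have Dl: "linear (?D z)" if "z \<in> punctured" for z
    using has_derivative_linear[OF C2_facts(2)[OF C that]] .
  have Hd: "((\<lambda>z. ?D z v) has_derivative ?H v) (at x)" for v using C2_facts(3)[OF C x] .
  have comb: "?H (a *\<^sub>R v1 + b *\<^sub>R v2) = (\<lambda>w. a * ?H v1 w + b * ?H v2 w)" for a b v1 v2
  proof -
    have "((\<lambda>z. a * ?D z v1 + b * ?D z v2) has_derivative (\<lambda>w. a * ?H v1 w + b * ?H v2 w)) (at x)"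
      by (intro has_derivative_add has_derivative_mult_right Hd)
    then have "((\<lambda>z. ?D z (a *\<^sub>R v1 + b *\<^sub>R v2)) has_derivative (\<lambda>w. a * ?H v1 w + b * ?H v2 w)) (at x)"
    proof (rule has_derivative_transform_within_open[OF _ open_punctured x])
      fix z :: 'a assume "z \<in> punctured"
      then show "a * ?D z v1 + b * ?D z v2 = ?D z (a *\<^sub>R v1 + b *\<^sub>R v2)"
        using linear_add[OF Dl] linear_scale[OF Dl] by simp
    qed
    then show ?thesis by (rule frechet_derivative_at[symmetric])
  qed
  show ?thesis
  proof (rule linearI)
    fix v1 v2
    show "sph_hess u x (v1 + v2) w = sph_hess u x v1 w + sph_hess u x v2 w"
      using comb[of 1 v1 1 v2] unfolding sph_hess_def by simp
  next
    fix c v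
    show "sph_hess u x (c *\<^sub>R v) w = c *\<^sub>R sph_hess u x v w"
      using comb[of c v 0 0] unfolding sph_hess_def by simp
  qed
qed

lemma sphere_punct: "x \<in> sphere (0::'a::euclidean_space) 1 \<Longrightarrow> x \<in> punctured"
  by (auto simp: punctured_def)

lemma hom0_sphere: "x \<in> sphere (0::'a::euclidean_space) 1 \<Longrightarrow> hom0 u x = u x"
  by (simp add: hom0_def)

lemma hom0_proj: "y \<in> punctured \<Longrightarrow> hom0 u y = u (y /\<^sub>R norm y) \<and> y /\<^sub>R norm (y::'a::euclidean_space) \<in> sphere 0 1"
  by (auto simp: hom0_def punctured_def)

lemma half:
  fixes phi u ub :: "'a::euclidean_space \<Rightarrow> real" and k :: nat and p q :: real
  assumes k1: "1 \<le> k" and kn: "k \<le> DIM('a) - 1" and pq: "p > q"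
    and phipos: "\<forall>x\<in>sphere 0 1. phi x > 0"
    and su: "pos_adm_solution k p q phi u" and sb: "pos_adm_solution k p q phi ub"
  shows "\<forall>x\<in>sphere 0 1. u x \<le> ub x"
proof -
  let ?N = "{1..DIM('a) - 1}"
  let ?n = "DIM('a) - 1"
  have Cu: "Ck_on 2 punctured (hom0 u)" using su unfolding pos_adm_solution_def by simp
  have Cb: "Ck_on 2 punctured (hom0 ub)" using sb unfolding pos_adm_solution_def by simp
  have upos: "\<And>x. x \<in> sphere 0 1 \<Longrightarrow> u x > 0" using su unfolding pos_adm_solution_def by simp
  have bpos: "\<And>x. x \<in> sphere 0 1 \<Longrightarrow> ub x > 0" using sb unfolding pos_adm_solution_def by simp
  have contu: "continuous_on (sphere 0 1) u"
  proof -
    have "continuous_on (sphere 0 1) (hom0 u)"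
      using C2_facts(1)[OF Cu] by (rule continuous_on_subset) (auto simp: punctured_def)
    then show ?thesis by (rule continuous_on_cong[THEN iffD1, OF refl, rotated]) (simp add: hom0_sphere)
  qed
  have contb: "continuous_on (sphere 0 1) ub"
  proof -
    have "continuous_on (sphere 0 1) (hom0 ub)"
      using C2_facts(1)[OF Cb] by (rule continuous_on_subset) (auto simp: punctured_def)
    then show ?thesis by (rule continuous_on_cong[THEN iffD1, OF refl, rotated]) (simp add: hom0_sphere)
  qed
  have contr: "continuous_on (sphere 0 1) (\<lambda>x. u x / ub x)"
  proof (intro continuous_on_divide contu contb ballI)
    fix x :: 'a assume "x \<in> sphere 0 1"
    then show "ub x \<noteq> 0" using bpos by force
  qed
  obtain b0 :: 'a where "b0 \<in> Basis" using nonempty_Basis by blast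
  then have "b0 \<in> sphere 0 1" by simp
  then have ne: "sphere (0::'a) 1 \<noteq> {}" by blast
  obtain x0 where x0: "x0 \<in> sphere 0 1" and x0max: "\<forall>y\<in>sphere 0 1. u y / ub y \<le> u x0 / ub x0"
    using continuous_attains_sup[OF compact_sphere ne contr] by blast
  define M where "M = u x0 / ub x0"
  have Mpos: "M > 0" unfolding M_def using upos bpos x0 by simp
  have uM: "u y \<le> M * ub y" if "y \<in> sphere 0 1" for y :: 'a
  proof -
    have "u y / ub y \<le> M" using x0max that unfolding M_def by simp
    then show ?thesis using bpos[OF that] by (simp add: divide_le_eq)
  qed
  show ?thesis
  proof (cases "M \<le> 1")
    case True
    show ?thesis
    proof
      fix y :: 'a assume y: "y \<in> sphere 0 1"
      have "M * ub y \<le> 1 * ub y" using True bpos[OF y] by (intro mult_right_mono) auto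
      then show "u y \<le> ub y" using uM[OF y] by simp
    qed
  next
    case False
    then have M1: "M > 1" by simp
    have ux0: "u x0 = M * ub x0" unfolding M_def using bpos[OF x0] by simp
    have x0p: "x0 \<in> punctured" using sphere_punct[OF x0] .
    define Du where "Du = (\<lambda>y. frechet_derivative (hom0 u) (at y))"
    define Db where "Db = (\<lambda>y. frechet_derivative (hom0 ub) (at y))"
    define g where "g = (\<lambda>y. hom0 u y - M * hom0 ub y)"
    define G where "G = (\<lambda>y v. Du y v - M * Db y v)"
    have gmax: "\<forall>y\<in>punctured. g y \<le> g x0"
    proof
      fix y :: 'a assume y: "y \<in> punctured"
      have "hom0 u y \<le> M * hom0 ub y" using hom0_proj[OF y, of u] hom0_proj[OF y, of ub] uM by auto
      moreover have "g x0 = 0" unfolding g_def using hom0_sphere[OF x0] ux0 by simp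
      ultimately show "g y \<le> g x0" unfolding g_def by simp
    qed
    have gder: "(g has_derivative G y) (at y)" if "y \<in> punctured" for y :: 'a
      unfolding g_def G_def Du_def Db_def
      by (intro has_derivative_diff has_derivative_mult_right C2_facts(2)[OF Cu that] C2_facts(2)[OF Cb that])
    have G0: "G x0 = (\<lambda>v. 0)"
      using differential_zero_maxmin[OF x0p open_punctured gder[OF x0p]] gmax by blast
    then have Dux: "Du x0 v = M * Db x0 v" for v unfolding G_def by (metis eq_iff_diff_eq_0)
    have so: "sph_hess u x0 v v - M * sph_hess ub x0 v v \<le> 0" for v
    proof -
      have "((\<lambda>y. G y v) has_derivative (\<lambda>w. sph_hess u x0 v w - M * sph_hess ub x0 v w)) (at x0)"
        unfolding G_def Du_def Db_def sph_hess_def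
        by (intro has_derivative_diff has_derivative_mult_right C2_facts(3)[OF Cu x0p] C2_facts(3)[OF Cb x0p])
      from second_order[OF open_punctured x0p gmax gder this] show ?thesis by simp
    qed
    define A where "A = (\<lambda>v w. sph_hess u x0 v w + u x0 * (v \<bullet> w))"
    define B where "B = (\<lambda>v w. M * (sph_hess ub x0 v w + ub x0 * (v \<bullet> w)))"
    have AB: "A v v \<le> B v v" for v
      using so[of v] unfolding A_def B_def ux0 by (simp add: algebra_simps)
    have lA1: "linear (\<lambda>v. A v w)" for w
    proof -
      have L: "linear (\<lambda>v. sph_hess u x0 v w)" by (rule hess_lin2[OF Cu x0p])
      show ?thesis unfolding A_def
        by (intro linearI) (simp_all add: linear_add[OF L] linear_scale[OF L] inner_add_left algebra_simps)
    qed
    have lA2: "linear (A v)" for v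
    proof -
      have L: "linear (sph_hess u x0 v)" by (rule hess_lin1[OF Cu x0p])
      show ?thesis unfolding A_def
        by (intro linearI) (simp_all add: linear_add[OF L] linear_scale[OF L] inner_add_right algebra_simps)
    qed
    have lB1: "linear (\<lambda>v. B v w)" for w
    proof -
      have L: "linear (\<lambda>v. sph_hess ub x0 v w)" by (rule hess_lin2[OF Cb x0p])
      show ?thesis unfolding B_def
        by (intro linearI) (simp_all add: linear_add[OF L] linear_scale[OF L] inner_add_left algebra_simps)
    qed
    have lB2: "linear (B v)" for v
    proof -
      have L: "linear (sph_hess ub x0 v)" by (rule hess_lin1[OF Cb x0p])
      show ?thesis unfolding B_def
        by (intro linearI) (simp_all add: linear_add[OF L] linear_scale[OF L] inner_add_right algebra_simps)
    qed
    obtain lam where lamE: "sph_eigs u x0 lam" and lamG: "in_Gamma ?n k lam"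
      and lamEq: "sigma ?n k lam = u x0 powr (p - 1) * (u x0 ^ 2 + sph_grad_sq u x0) powr ((real k + 1 - q) / 2) * phi x0"
      using su x0 unfolding pos_adm_solution_def by blast
    obtain mu where muE: "sph_eigs ub x0 mu" and muG: "in_Gamma ?n k mu"
      and muEq: "sigma ?n k mu = ub x0 powr (p - 1) * (ub x0 ^ 2 + sph_grad_sq ub x0) powr ((real k + 1 - q) / 2) * phi x0"
      using sb x0 unfolding pos_adm_solution_def by blast
    obtain e where tfe: "tangent_frame x0 e" and de: "\<And>i j. i \<in> ?N \<Longrightarrow> j \<in> ?N \<Longrightarrow>
         sph_hess u x0 (e i) (e j) + (if i = j then u x0 else 0) = (if i = j then lam i else 0)"
      using lamE unfolding sph_eigs_def by blast
    obtain f where tff: "tangent_frame x0 f" and df: "\<And>i j. i \<in> ?N \<Longrightarrow> j \<in> ?N \<Longrightarrow>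
         sph_hess ub x0 (f i) (f j) + (if i = j then ub x0 else 0) = (if i = j then mu i else 0)"
      using muE unfolding sph_eigs_def by blast
    have dA: "A (e i) (e j) = (if i = j then lam i else 0)" if "i \<in> ?N" "j \<in> ?N" for i j
      using de[OF that] frame_props(2)[OF tfe that] unfolding A_def by (auto split: if_splits)
    have dB: "B (f i) (f j) = (if i = j then M * mu i else 0)" if "i \<in> ?N" "j \<in> ?N" for i j
      using df[OF that] frame_props(2)[OF tff that] unfolding B_def by (auto split: if_splits)
    have nx0: "norm x0 = 1" using x0 by simp
    have cnt: "\<forall>t. card {i\<in>?N. t \<le> lam i} \<le> card {j\<in>?N. t \<le> M * mu j}"
      using count_le[OF nx0 tfe tff lA1 lA2 lB1 lB2 dA dB AB] by blast
    obtain pm where pm: "bij_betw pm ?N ?N" "\<forall>i\<in>?N. lam i \<le> M * mu (pm i)"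
      using matching[of ?N ?N "card ?N" lam "\<lambda>j. M * mu j"] cnt by auto
    have Glam: "Gam ?N k lam" using lamG unfolding in_Gamma_def Gam_def sigma_sig .
    have Gmu: "Gam ?N k mu" using muG unfolding in_Gamma_def Gam_def sigma_sig .
    have "sig ?N k lam \<le> sig ?N k (\<lambda>i. M * mu (pm i))"
      using sig_mono[OF _ Glam] pm(2) by simp
    also have "\<dots> = sig ?N k (\<lambda>i. M * mu i)" using sig_reindex[OF _ pm(1), of k "\<lambda>i. M * mu i"] by simp
    also have "\<dots> = M ^ k * sig ?N k mu" by (rule sig_scale)
    finally have ineq: "sigma ?n k lam \<le> M ^ k * sigma ?n k mu" unfolding sigma_sig .
    have smu: "sigma ?n k mu > 0" using Gmu k1 unfolding Gam_def sigma_sig by auto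
    have gsq: "sph_grad_sq u x0 = M\<^sup>2 * sph_grad_sq ub x0"
      unfolding sph_grad_sq_def using Dux unfolding Du_def Db_def
      by (simp add: sum_distrib_left power_mult_distrib)
    define r where "r = (real k + 1 - q) / 2"
    define X where "X = ub x0 ^ 2 + sph_grad_sq ub x0"
    have Xpos: "X > 0" unfolding X_def sph_grad_sq_def using bpos[OF x0]
      by (intro add_pos_nonneg) (auto intro: sum_nonneg)
    have "u x0 ^ 2 + sph_grad_sq u x0 = M\<^sup>2 * X" unfolding X_def gsq ux0 by (simp add: algebra_simps power_mult_distrib)
    then have "sigma ?n k lam = (M * ub x0) powr (p - 1) * (M\<^sup>2 * X) powr r * phi x0"
      using lamEq ux0 unfolding r_def by simp
    also have "\<dots> = M powr (p - 1 + 2 * r) * (ub x0 powr (p - 1) * X powr r * phi x0)"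
    proof -
      have "(M * ub x0) powr (p - 1) = M powr (p - 1) * ub x0 powr (p - 1)"
        using Mpos bpos[OF x0] by (simp add: powr_mult)
      moreover have "(M\<^sup>2 * X) powr r = M powr (2 * r) * X powr r"
      proof -
        have "(M\<^sup>2 * X) powr r = (M\<^sup>2) powr r * X powr r" using Mpos Xpos by (simp add: powr_mult)
        moreover have "(M\<^sup>2) powr r = M powr (2 * r)"
        proof -
          have "M\<^sup>2 = M powr 2" using powr_realpow[OF Mpos, of 2] by simp
          then show ?thesis by (simp add: powr_powr)
        qed
        ultimately show ?thesis by simp
      qed
      ultimately show ?thesis by (simp add: powr_add)
    qed
    also have "\<dots> = M powr (p - 1 + 2 * r) * sigma ?n k mu"
      using muEq unfolding X_def r_def by simp
    moreover have "p - 1 + 2 * r = p + real k - q" unfolding r_def by (simp add: field_simps)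
    ultimately have seq: "sigma ?n k lam = M powr (p + real k - q) * sigma ?n k mu"
      by simp
    have "M powr (p + real k - q) * sigma ?n k mu \<le> M powr (real k) * sigma ?n k mu"
      using ineq seq powr_realpow[OF Mpos, of k] by simp
    then have "M powr (p + real k - q) \<le> M powr (real k)" using smu by simp
    moreover have "M powr (real k) < M powr (p + real k - q)" using pq M1 by (intro powr_less_mono) auto
    ultimately show ?thesis by simp
  qed
qed

theorem mainTheorem7:
  fixes phi u ubar :: "'a::euclidean_space \<Rightarrow> real" and k :: nat and p q :: real
  assumes "1 \<le> k" and "k \<le> DIM('a) - 1" and "p > q"
    and "smooth_on punctured (hom0 phi)" and "\<forall>x\<in>sphere 0 1. phi x > 0"
    and "pos_adm_solution k p q phi u" and "pos_adm_solution k p q phi ubar"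
  shows "\<forall>x\<in>sphere 0 1. u x = ubar x"
proof
  fix x :: 'a assume x: "x \<in> sphere 0 1"
  have "u x \<le> ubar x" using half[OF assms(1,2,3,5,6,7)] x by blast
  moreover have "ubar x \<le> u x" using half[OF assms(1,2,3,5,7,6)] x by blast
  ultimately show "u x = ubar x" by simp
qed

end
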